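(* Let $2\le R<K$ and $\epsilon\in(0,1)$, and let $$m=\left\lceil\frac{K(K-1)}{(K-R)(R-1)}\log\!\Big(\frac{K}{\epsilon}\Big)\right\rceil.$$ Choose $\mathcal{Y}_1,\ldots,\mathcal{Y}_m$ independently and uniformly at random among the $R$-element subsets of $[K]$. Let $Z$ be uniform on $[K]$, independent of the $\mathcal{Y}_i$, and, given $\mathcal{Y}_1,\ldots,\mathcal{Y}_m$ and $Z=k$, let $Y_1,\ldots,Y_m$ be conditionally independent with $Y_i=k$ if $k\in\mathcal{Y}_i$ and $Y_i$ uniform on $\mathcal{Y}_i$ if $k\notin\mathcal{Y}_i$. Let $g$ be the maximum-likelihood decoder $g(y)\in\arg\max_{k\in[K]}\mathcal{L}(y;k)$ with $\mathcal{L}(y;k)=\prod_{i=1}^m\mathbb{P}(Y_i=y_i\mid Z=k,\mathcal{Y}_1,\ldots,\mathcal{Y}_m)$, ties broken arbitrarily. Then $\mathbb{P}(g(Y)\ne Z)\le\epsilon$, where the probability is over the random choice of the $\mathcal{Y}_i$, of $Z$, and of $Y$.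
   Context: $[K]=\{1,\ldots,K\}$; $\log$ denotes the natural logarithm. *)

theory Defs
  imports "HOL-Probability.Probability"
begin

definition rsubsets :: "nat \<Rightarrow> nat \<Rightarrow> nat set set" where
  "rsubsets K R = {S. S \<subseteq> {1..K} \<and> card S = R}"

definition chan :: "nat set \<Rightarrow> nat \<Rightarrow> nat pmf" where
  "chan S k = (if k \<in> S then return_pmf k else pmf_of_set S)"

definition likelihood :: "nat \<Rightarrow> (nat \<Rightarrow> nat set) \<Rightarrow> (nat \<Rightarrow> nat) \<Rightarrow> nat \<Rightarrow> real" where
  "likelihood m Ys y k = (\<Prod>i<m. pmf (chan (Ys i) k) (y i))"

definition ml_experiment :: "nat \<Rightarrow> nat \<Rightarrow> nat \<Rightarrow> ((nat \<Rightarrow> nat set) \<times> nat \<times> (nat \<Rightarrow> nat)) pmf" where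
  "ml_experiment K R m =
     do { Ys \<leftarrow> Pi_pmf {..<m} {} (\<lambda>_. pmf_of_set (rsubsets K R));
          z \<leftarrow> pmf_of_set {1..K};
          y \<leftarrow> Pi_pmf {..<m} 0 (\<lambda>i. chan (Ys i) z);
          return_pmf (Ys, z, y) }"

end

theory Submission
  imports Defs
begin

lemma rsubsets_finite: "finite (rsubsets K R)"
  unfolding rsubsets_def by (rule finite_subset[of _ "Pow {1..K}"]) auto

lemma rsubsets_nonempty: "R \<le> K \<Longrightarrow> rsubsets K R \<noteq> {}"
proof -
  assume "R \<le> K"
  hence "{1..R} \<in> rsubsets K R" by (auto simp: rsubsets_def)
  thus ?thesis by blast
qed

lemma card_rsubsets: "card (rsubsets K R) = K choose R"
  unfolding rsubsets_def using n_subsets[of "{1..K}" R] by simp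

lemma card_rsubsets_mem:
  assumes "k \<in> {1..K}" "R \<ge> 1"
  shows "card {S \<in> rsubsets K R. k \<in> S} = (K - 1) choose (R - 1)"
proof -
  have eq: "{S \<in> rsubsets K R. k \<in> S} = insert k ` {T. T \<subseteq> {1..K}-{k} \<and> card T = R-1}"
  proof (rule set_eqI, rule iffI)
    fix S assume "S \<in> {S \<in> rsubsets K R. k \<in> S}"
    hence S: "S \<subseteq> {1..K}" "card S = R" "k\<in>S" by (auto simp: rsubsets_def)
    have fin: "finite S" using S(1) finite_subset by blast
    have "S = insert k (S - {k})" using S(3) by auto
    moreover have "S - {k} \<in> {T. T \<subseteq> {1..K}-{k} \<and> card T = R-1}" using S fin by auto
    ultimately show "S \<in> insert k ` {T. T \<subseteq> {1..K}-{k} \<and> card T = R-1}" by blast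
  next
    fix S assume "S \<in> insert k ` {T. T \<subseteq> {1..K}-{k} \<and> card T = R-1}"
    then obtain T where T: "T \<subseteq> {1..K}-{k}" "card T = R-1" "S = insert k T" by auto
    have fin: "finite T" using T(1) by (meson finite_Diff finite_atLeastAtMost finite_subset)
    have "k \<notin> T" using T(1) by auto
    hence "card S = R" using T fin assms by simp
    then show "S \<in> {S \<in> rsubsets K R. k \<in> S}" using T assms by (auto simp: rsubsets_def)
  qed
  have inj: "inj_on (insert k) {T. T \<subseteq> {1..K}-{k} \<and> card T = R-1}"
  proof (rule inj_onI)
    fix A B assume "A \<in> {T. T \<subseteq> {1..K}-{k} \<and> card T = R-1}" "B \<in> {T. T \<subseteq> {1..K}-{k} \<and> card T = R-1}"
      "insert k A = insert k B"
    thus "A = B" by (metis (no_types, lifting) Diff_insert_absorb insert_Diff_single mem_Collect_eq subset_Diff_insert)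
  qed
  have "card {S \<in> rsubsets K R. k \<in> S} = card {T. T \<subseteq> {1..K}-{k} \<and> card T = R-1}"
    unfolding eq by (rule card_image[OF inj])
  also have "\<dots> = card ({1..K}-{k}) choose (R-1)" by (rule n_subsets) simp
  also have "card ({1..K}-{k}) = K - 1" using assms by simp
  finally show ?thesis .
qed

lemma expect_h:
  assumes "k \<in> {1..K}" "1 \<le> R" "R \<le> K"
  shows "measure_pmf.expectation (pmf_of_set (rsubsets K R)) (\<lambda>S. if k \<in> S then 1 / real R else 1)
     = 1 - (real R - 1) / real K"
proof -
  let ?rs = "rsubsets K R"
  let ?A = "{S \<in> ?rs. k \<in> S}"
  have fin: "finite ?rs" by (rule rsubsets_finite)
  have ne: "?rs \<noteq> {}" using assms by (intro rsubsets_nonempty) auto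
  have "sum (\<lambda>S. if k \<in> S then 1 / real R else 1) ?rs
      = sum (\<lambda>S. 1 - (1 - 1 / real R) * (if k \<in> S then 1 else 0)) ?rs"
    by (rule sum.cong) auto
  also have "\<dots> = real (card ?rs) - (1 - 1 / real R) * sum (\<lambda>S. if k \<in> S then 1 else 0) ?rs"
    by (simp add: sum_subtractf sum_distrib_left)
  also have "sum (\<lambda>S. if k \<in> S then 1 else 0) ?rs = real (card ?A)"
    using fin by (simp add: sum.If_cases Int_def)
  finally have s: "sum (\<lambda>S. if k \<in> S then 1 / real R else 1) ?rs
      = real (card ?rs) - (1 - 1 / real R) * real (card ?A)" .
  have c1: "card ?A = (K - 1) choose (R - 1)" using assms by (intro card_rsubsets_mem) auto
  have c2: "card ?rs = K choose R" by (rule card_rsubsets)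
  have key: "real K * real ((K - 1) choose (R - 1)) = real (K choose R) * real R"
  proof -
    have "Suc (K-1) * ((K-1) choose (R-1)) = (Suc (K-1) choose Suc (R-1)) * Suc (R-1)"
      by (rule Suc_times_binomial_eq)
    moreover have "Suc (K-1) = K" "Suc (R-1) = R" using assms by auto
    ultimately have "K * ((K-1) choose (R-1)) = (K choose R) * R" by simp
    thus ?thesis by (metis of_nat_mult)
  qed
  have pos: "real (K choose R) > 0" using assms by simp
  have "measure_pmf.expectation (pmf_of_set ?rs) (\<lambda>S. if k \<in> S then 1 / real R else 1)
      = (real (K choose R) - (1 - 1 / real R) * real ((K - 1) choose (R - 1))) / real (K choose R)"
    using fin ne by (simp add: integral_pmf_of_set s c1 c2)
  also have "\<dots> = 1 - (real R - 1) / real K"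
    using key pos assms by (simp add: field_simps)
  finally show ?thesis .
qed

lemma factor_bound:
  assumes "S \<in> rsubsets K R" "1 \<le> R" "z \<noteq> k"
  shows "measure_pmf.prob (chan S z) {v. 0 < pmf (chan S k) v} \<le> (if k \<in> S then 1 / real R else 1)"
proof (cases "k \<in> S")
  case False
  thus ?thesis by (simp add: measure_pmf.prob_le_1)
next
  case True
  have S: "finite S" "card S = R" using assms(1) unfolding rsubsets_def
    by (auto intro: finite_subset)
  have ne: "S \<noteq> {}" using S assms(2) by auto
  have set: "{v. 0 < pmf (chan S k) v} = {k}" using True by (auto simp: chan_def pmf_return split: split_indicator)
  show ?thesis
  proof (cases "z \<in> S")
    case True
    thus ?thesis using \<open>k \<in> S\<close> assms(3) set by (simp add: chan_def)
  next
    case False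
    hence "measure_pmf.prob (chan S z) {k} = 1 / real R"
      using S ne \<open>k \<in> S\<close> by (simp add: chan_def measure_pmf_of_set)
    thus ?thesis using set \<open>k \<in> S\<close> by simp
  qed
qed

lemma ac_helper: fixes x y :: real assumes "x - y > 0" "y - 1 > 0" "x > 0"
  shows "(y - 1) / x * ((x * (x - 1)) / ((x - y) * (y - 1))) = (x - 1)/(x - y)"
proof -
  have n: "x - y \<noteq> 0" "y - 1 \<noteq> 0" "x \<noteq> 0" using assms by auto
  have "(y - 1) / x * ((x * (x - 1)) / ((x - y) * (y - 1))) = ((x-1) * (x * (y - 1))) / ((x - y) * (x * (y - 1)))"
    by (simp add: ac_simps)
  also have "\<dots> = (x-1)/(x-y)" using n by (subst mult_divide_mult_cancel_right) auto
  finally show ?thesis .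
qed

lemma arith_bound:
  fixes K R m :: nat and \<epsilon> :: real
  assumes "2 \<le> R" and "R < K"
    and "0 < \<epsilon>" and "\<epsilon> < 1"
    and "m = nat \<lceil>(real K * (real K - 1)) / ((real K - real R) * (real R - 1)) * ln (real K / \<epsilon>)\<rceil>"
  shows "real K * (1 - (real R - 1) / real K) ^ m \<le> \<epsilon>"
proof -
  define a where "a = (real R - 1) / real K"
  define L where "L = ln (real K / \<epsilon>)"
  define c where "c = (real K * (real K - 1)) / ((real K - real R) * (real R - 1))"
  have K0: "real K > 0" using assms by simp
  have "real K / \<epsilon> > 1" using assms by (simp add: field_simps)
  hence L0: "L > 0" unfolding L_def by simp
  have c0: "c \<ge> 0" unfolding c_def using assms by (auto intro!: divide_nonneg_nonneg mult_nonneg_nonneg)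
  have mge: "real m \<ge> c * L" unfolding assms(5) c_def[symmetric] L_def[symmetric] by (rule real_nat_ceiling_ge)
  have a0: "a \<ge> 0" "a \<le> 1" unfolding a_def using assms by (auto simp: field_simps)
  have aml: "a * real m \<ge> L"
  proof -
    have "a * c = (real K - 1) / (real K - real R)"
      unfolding a_def c_def using assms by (intro ac_helper) auto
    also have "\<dots> \<ge> 1" using assms by simp
    finally have ac: "a * c \<ge> 1" .
    have "a * real m \<ge> a * (c * L)" using mge a0 by (intro mult_left_mono) auto
    moreover have "a * (c * L) \<ge> L" using ac L0
      using mult_right_mono[of 1 "a*c" L] by (simp add: mult.assoc)
    ultimately show ?thesis by linarith
  qed
  have "1 - a \<le> exp (- a)" using exp_ge_add_one_self[of "-a"] by simp
  hence "(1 - a) ^ m \<le> exp (- a) ^ m" using a0 by (intro power_mono) auto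
  also have "\<dots> = exp (real m * (- a))" by (rule exp_of_nat_mult[symmetric])
  also have "\<dots> = exp (- (a * real m))" by (simp add: algebra_simps)
  also have "\<dots> \<le> exp (- L)" using aml by simp
  also have "exp (- L) = \<epsilon> / real K" unfolding L_def using assms K0
    by (simp add: exp_minus exp_ln)
  finally have "(1 - a) ^ m \<le> \<epsilon> / real K" .
  hence "real K * (1 - a) ^ m \<le> real K * (\<epsilon> / real K)" using K0 by (intro mult_left_mono) auto
  also have "\<dots> = \<epsilon>" using K0 by simp
  finally show ?thesis unfolding a_def .
qed

lemma support:
  assumes "R \<le> K" "1 \<le> K" "(Ys, z, y) \<in> set_pmf (ml_experiment K R m)"
  shows "z \<in> {1..K} \<and> (\<forall>i<m. Ys i \<in> rsubsets K R)
     \<and> (\<forall>i<m. y i \<in> set_pmf (chan (Ys i) z))"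
proof -
  have f: "finite (rsubsets K R)" "rsubsets K R \<noteq> {}" "{1..K} \<noteq> {}" "finite {1..K}"
    using rsubsets_finite[of K R] rsubsets_nonempty[OF assms(1)] assms(2) by auto
  from assms(3) obtain Ys' z' y' where
    a: "Ys' \<in> set_pmf (Pi_pmf {..<m} {} (\<lambda>_. pmf_of_set (rsubsets K R)))"
       "z' \<in> set_pmf (pmf_of_set {1..K})"
       "y' \<in> set_pmf (Pi_pmf {..<m} 0 (\<lambda>i. chan (Ys' i) z'))"
       "(Ys, z, y) = (Ys', z', y')"
    unfolding ml_experiment_def by (auto simp del: set_pmf_of_set)
  have "z \<in> {1..K}" using a(2,4) set_pmf_of_set[OF f(3,4)] by simp
  moreover have "\<forall>i<m. Ys i \<in> rsubsets K R"
    using a(1,4) set_pmf_of_set[OF f(2,1)] by (simp add: set_Pi_pmf PiE_dflt_def)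
  moreover have "\<forall>i<m. y i \<in> set_pmf (chan (Ys i) z)"
    using a(3,4) by (simp add: set_Pi_pmf PiE_dflt_def)
  ultimately show ?thesis by blast
qed

lemma error_subset:
  assumes "R \<le> K" "1 \<le> K"
    and g1: "\<And>Ys y. g Ys y \<in> {1..K}"
    and g2: "\<And>Ys y k. k \<in> {1..K} \<Longrightarrow> likelihood m Ys y k \<le> likelihood m Ys y (g Ys y)"
  shows "{(Ys, z, y). g Ys y \<noteq> z} \<inter> set_pmf (ml_experiment K R m)
     \<subseteq> (\<Union>k'\<in>{1..K}. {(Ys, z, y). z \<noteq> k' \<and> (\<forall>i<m. 0 < pmf (chan (Ys i) k') (y i))})"
proof
  fix x assume x: "x \<in> {(Ys, z, y). g Ys y \<noteq> z} \<inter> set_pmf (ml_experiment K R m)"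
  obtain Ys z y where xe: "x = (Ys, z, y)" by (cases x) auto
  have sup: "z \<in> {1..K}" "\<forall>i<m. y i \<in> set_pmf (chan (Ys i) z)"
    using support[OF assms(1,2), of Ys z y m] x xe by auto
  have gz: "g Ys y \<noteq> z" using x xe by auto
  have "likelihood m Ys y z > 0" unfolding likelihood_def
    using sup(2) by (intro prod_pos) (auto simp: set_pmf_iff pmf_nonneg order.strict_iff_order)
  hence "likelihood m Ys y (g Ys y) > 0" using g2[OF sup(1), of Ys y] by linarith
  hence "(\<Prod>i<m. pmf (chan (Ys i) (g Ys y)) (y i)) \<noteq> 0" unfolding likelihood_def by linarith
  hence "\<forall>i<m. pmf (chan (Ys i) (g Ys y)) (y i) \<noteq> 0"
    using prod_zero_iff[of "{..<m}" "\<lambda>i. pmf (chan (Ys i) (g Ys y)) (y i)"] by auto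
  hence "\<forall>i<m. 0 < pmf (chan (Ys i) (g Ys y)) (y i)" by (simp add: order.strict_iff_order pmf_nonneg)
  thus "x \<in> (\<Union>k'\<in>{1..K}. {(Ys, z, y). z \<noteq> k' \<and> (\<forall>i<m. 0 < pmf (chan (Ys i) k') (y i))})"
    using gz g1[of Ys y] xe by auto
qed

lemma single_bound:
  assumes "2 \<le> R" "R \<le> K" "k' \<in> {1..K}"
  shows "measure_pmf.prob (ml_experiment K R m)
     {(Ys, z, y). z \<noteq> k' \<and> (\<forall>i<m. 0 < pmf (chan (Ys i) k') (y i))} \<le> (1 - (real R - 1) / real K) ^ m"
proof -
  define B where "B = {(Ys, z, y). z \<noteq> k' \<and> (\<forall>i<m. 0 < pmf (chan (Ys i) k') (y i))}"
  define U where "U = pmf_of_set (rsubsets K R)"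
  define PY where "PY = Pi_pmf {..<m} {} (\<lambda>_. U)"
  define h where "h = (\<lambda>S. if k' \<in> S then 1 / real R else 1::real)"
  have fin: "finite (rsubsets K R)" "rsubsets K R \<noteq> {}"
    using rsubsets_finite[of K R] rsubsets_nonempty[OF assms(2)] by auto
  have setU: "set_pmf U = rsubsets K R" unfolding U_def using fin by simp
  have h01: "0 \<le> h S" "h S \<le> 1" for S unfolding h_def using assms by auto
  have exp: "ml_experiment K R m = bind_pmf PY (\<lambda>Ys. bind_pmf (pmf_of_set {1..K}) (\<lambda>z.
      map_pmf (\<lambda>y. (Ys, z, y)) (Pi_pmf {..<m} 0 (\<lambda>i. chan (Ys i) z))))"
    unfolding ml_experiment_def PY_def U_def map_pmf_def by simp
  have inner: "emeasure (measure_pmf (map_pmf (\<lambda>y. (Ys, z, y)) (Pi_pmf {..<m} 0 (\<lambda>i. chan (Ys i) z)))) B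
      \<le> ennreal (\<Prod>i<m. h (Ys i))" if Ys: "\<forall>i<m. Ys i \<in> rsubsets K R" for Ys z
  proof (cases "z = k'")
    case True
    hence "(\<lambda>y. (Ys, z, y)) -` B = {}" unfolding B_def by auto
    thus ?thesis by (simp add: emeasure_map_pmf) 
  next
    case False
    hence pre: "(\<lambda>y. (Ys, z, y)) -` B = Pi {..<m} (\<lambda>i. {v. 0 < pmf (chan (Ys i) k') v})"
      unfolding B_def by (auto simp: Pi_def)
    have "emeasure (measure_pmf (map_pmf (\<lambda>y. (Ys, z, y)) (Pi_pmf {..<m} 0 (\<lambda>i. chan (Ys i) z)))) B
       = ennreal (measure_pmf.prob (Pi_pmf {..<m} 0 (\<lambda>i. chan (Ys i) z)) (Pi {..<m} (\<lambda>i. {v. 0 < pmf (chan (Ys i) k') v})))"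
      by (simp add: measure_pmf.emeasure_eq_measure pre)
    also have "measure_pmf.prob (Pi_pmf {..<m} 0 (\<lambda>i. chan (Ys i) z)) (Pi {..<m} (\<lambda>i. {v. 0 < pmf (chan (Ys i) k') v}))
       = (\<Prod>i<m. measure_pmf.prob (chan (Ys i) z) {v. 0 < pmf (chan (Ys i) k') v})"
      by (rule measure_Pi_pmf_Pi) simp
    also have "\<dots> \<le> (\<Prod>i<m. h (Ys i))"
      using Ys False assms unfolding h_def
      by (intro prod_mono conjI factor_bound) auto
    finally show ?thesis by (simp add: ennreal_leI)
  qed
  have "emeasure (measure_pmf (ml_experiment K R m)) B
     = \<integral>\<^sup>+Ys. \<integral>\<^sup>+z. emeasure (measure_pmf (map_pmf (\<lambda>y. (Ys, z, y)) (Pi_pmf {..<m} 0 (\<lambda>i. chan (Ys i) z)))) B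
        \<partial>measure_pmf (pmf_of_set {1..K}) \<partial>measure_pmf PY"
    unfolding exp by simp
  also have "\<dots> \<le> \<integral>\<^sup>+Ys. ennreal (\<Prod>i<m. h (Ys i)) \<partial>measure_pmf PY"
  proof (rule nn_integral_mono_AE, rule AE_pmfI)
    fix Ys assume "Ys \<in> set_pmf PY"
    hence Ys: "\<forall>i<m. Ys i \<in> rsubsets K R" unfolding PY_def
      by (simp add: set_Pi_pmf PiE_dflt_def setU)
    have "(\<integral>\<^sup>+z. emeasure (measure_pmf (map_pmf (\<lambda>y. (Ys, z, y)) (Pi_pmf {..<m} 0 (\<lambda>i. chan (Ys i) z)))) B
        \<partial>measure_pmf (pmf_of_set {1..K})) \<le> \<integral>\<^sup>+z. ennreal (\<Prod>i<m. h (Ys i)) \<partial>measure_pmf (pmf_of_set {1..K})"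
      by (rule nn_integral_mono) (rule inner[OF Ys])
    also have "\<dots> = ennreal (\<Prod>i<m. h (Ys i))"
      by (simp add: measure_pmf.emeasure_space_1)
    finally show "(\<integral>\<^sup>+z. emeasure (measure_pmf (map_pmf (\<lambda>y. (Ys, z, y)) (Pi_pmf {..<m} 0 (\<lambda>i. chan (Ys i) z)))) B
        \<partial>measure_pmf (pmf_of_set {1..K})) \<le> ennreal (\<Prod>i<m. h (Ys i))" .
  qed
  also have "\<dots> = ennreal (measure_pmf.expectation PY (\<lambda>Ys. \<Prod>i<m. h (Ys i)))"
  proof (rule nn_integral_eq_integral)
    show "integrable (measure_pmf PY) (\<lambda>Ys. \<Prod>i<m. h (Ys i))"
      by (rule measure_pmf.integrable_const_bound[where B=1])
         (auto intro!: AE_pmfI prod_le_1 h01 prod_nonneg simp: abs_prod abs_of_nonneg[OF h01(1)])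
  qed (auto intro!: AE_pmfI prod_nonneg h01)
  also have "measure_pmf.expectation PY (\<lambda>Ys. \<Prod>i<m. h (Ys i)) = (\<Prod>i<m. measure_pmf.expectation U h)"
    unfolding PY_def
    by (rule expectation_prod_Pi_pmf) (auto intro: integrable_measure_pmf_finite simp: setU fin h01)
  also have "measure_pmf.expectation U h = 1 - (real R - 1) / real K"
    unfolding U_def h_def using assms by (intro expect_h) auto
  finally have "emeasure (measure_pmf (ml_experiment K R m)) B \<le> ennreal ((1 - (real R - 1) / real K) ^ m)"
    by simp
  moreover have "(1 - (real R - 1) / real K) ^ m \<ge> 0" using assms by auto
  ultimately show ?thesis unfolding B_def[symmetric]
    by (simp add: measure_pmf.emeasure_eq_measure)
qed

theorem theorem5:
  fixes K R m :: nat and \<epsilon> :: real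
    and g :: "(nat \<Rightarrow> nat set) \<Rightarrow> (nat \<Rightarrow> nat) \<Rightarrow> nat"
  assumes "2 \<le> R" and "R < K"
    and "0 < \<epsilon>" and "\<epsilon> < 1"
    and "m = nat \<lceil>(real K * (real K - 1)) / ((real K - real R) * (real R - 1)) * ln (real K / \<epsilon>)\<rceil>"
    and "\<And>Ys y. g Ys y \<in> {1..K}"
    and "\<And>Ys y k. k \<in> {1..K} \<Longrightarrow> likelihood m Ys y k \<le> likelihood m Ys y (g Ys y)"
  shows "measure_pmf.prob (ml_experiment K R m) {(Ys, z, y). g Ys y \<noteq> z} \<le> \<epsilon>"
proof -
  let ?p = "ml_experiment K R m"
  let ?B = "\<lambda>k'. {(Ys, z, y). z \<noteq> k' \<and> (\<forall>i<m. 0 < pmf (chan (Ys i) k') (y i))}"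
  have "measure_pmf.prob ?p {(Ys, z, y). g Ys y \<noteq> z}
      = measure_pmf.prob ?p ({(Ys, z, y). g Ys y \<noteq> z} \<inter> set_pmf ?p)"
    by (rule measure_Int_set_pmf[symmetric])
  also have "\<dots> \<le> measure_pmf.prob ?p (\<Union>k'\<in>{1..K}. ?B k')"
    by (rule measure_pmf.finite_measure_mono[OF error_subset]) (use assms in auto)
  also have "\<dots> \<le> (\<Sum>k'\<in>{1..K}. measure_pmf.prob ?p (?B k'))"
    by (rule measure_pmf.finite_measure_subadditive_finite) auto
  also have "\<dots> \<le> (\<Sum>k'\<in>{1..K}. (1 - (real R - 1) / real K) ^ m)"
    by (rule sum_mono, rule single_bound) (use assms in auto)
  also have "\<dots> = real K * (1 - (real R - 1) / real K) ^ m" by simp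
  also have "\<dots> \<le> \<epsilon>" by (rule arith_bound) (use assms in auto)
  finally show ?thesis .
qed

end
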